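(* Let $\mathcal{X}$ and $\mathcal{Y}$ be finite sets and let $p(X,Y)$ be a fully supported probability distribution on $\mathcal{X}\times\mathcal{Y}$ (i.e. $p(x,y)>0$ for all $(x,y)$), with conditional $p(Y|X)$ and marginals $p(X)$, $p(Y)$, and assume that $p(Y)(y)=\sum_x p(y|x)p(x)$ is the uniform distribution on $\mathcal{Y}$. Let $\kappa\in C(\mathcal{X}\times\mathcal{Y},\mathcal{T})$ be a solution of the Intertwining Information Bottleneck (IIB) problem with parameter $\lambda=I(X;Y)$. Then for any pair of bijections $\sigma:\mathcal{X}\to\mathcal{X}$, $\tau:\mathcal{Y}\to\mathcal{Y}$, the pair $(\sigma,\tau)$ is an equivariance of $p(Y|X)$ if and only if $$\kappa\circ(\sigma\otimes\tau)=\kappa,\quad\text{i.e. }\ \kappa(t\mid \sigma(x),\tau(y))=\kappa(t\mid x,y)\ \text{ for all } (x,y,t)\in\mathcal{X}\times\mathcal{Y}\times\mathcal{T}.$$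
   Context: $\mathcal{T}:=\mathbb{N}$. For finite or countable sets $\mathcal{A},\mathcal{B}$, $C(\mathcal{A},\mathcal{B})$ denotes the set of channels (conditional probabilities) $\kappa(b|a)$ from $\mathcal{A}$ to $\mathcal{B}$; deterministic maps are viewed as deterministic channels and $\circ$ is channel composition. For a distribution $r$ on $\mathcal{X}\times\mathcal{Y}$ and $\kappa\in C(\mathcal{X}\times\mathcal{Y},\mathcal{T})$, $\kappa(r)$ is the distribution $t\mapsto\sum_{x,y}\kappa(t|x,y)r(x,y)$. $I_\kappa(X,Y;T)$ is the mutual information between $(X,Y)$ and $T$ under the joint distribution $p(x,y)\kappa(t|x,y)$, $D(\cdot\|\cdot)$ is the Kullback–Leibler divergence, and $I(X;Y)=D(p(X,Y)\|p(X)p(Y))$. For $0\le\lambda\le I(X;Y)$, the IIB problem is: minimise $I_\kappa(X,Y;T)$ over $\kappa\in C(\mathcal{X}\times\mathcal{Y},\mathcal{T})$ subject to $D(\kappa(p(X,Y))\,\|\,\kappa(p(X)p(Y)))=\lambda$; a solution is a minimiser. An (exact) equivariance of $p(Y|X)$ is a pair of bijections $(\sigma,\tau)$ of $\mathcal{X}$ and $\mathcal{Y}$ with $p(Y|X)\circ\sigma=\tau\circ p(Y|X)$ as channels, i.e. $p(y\mid\sigma(x))=p(\tau^{-1}(y)\mid x)$ for all $x,y$. *)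

theory Defs
  imports "HOL-Analysis.Analysis"
begin

text \<open>Channels from a finite alphabet 'a to the countable alphabet T = nat:
  kappa a t = kappa(t|a), nonnegative and summing to 1 over t.\<close>
definition channel :: "('a \<Rightarrow> nat \<Rightarrow> real) \<Rightarrow> bool" where
  "channel \<kappa> \<longleftrightarrow> (\<forall>a t. 0 \<le> \<kappa> a t) \<and> (\<forall>a. (\<kappa> a has_sum 1) UNIV)"

definition push :: "('a::finite \<Rightarrow> nat \<Rightarrow> real) \<Rightarrow> ('a \<Rightarrow> real) \<Rightarrow> nat \<Rightarrow> real" where
  "push \<kappa> r t = (\<Sum>a\<in>UNIV. \<kappa> a t * r a)"

definition KL :: "('a \<Rightarrow> real) \<Rightarrow> ('a \<Rightarrow> real) \<Rightarrow> real" where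
  "KL q r = infsum (\<lambda>a. if q a = 0 then 0 else q a * ln (q a / r a)) UNIV"

definition margA :: "('a \<times> 'b \<Rightarrow> real) \<Rightarrow> 'a \<Rightarrow> real" where
  "margA j a = infsum (\<lambda>b. j (a, b)) UNIV"

definition margB :: "('a \<times> 'b \<Rightarrow> real) \<Rightarrow> 'b \<Rightarrow> real" where
  "margB j b = infsum (\<lambda>a. j (a, b)) UNIV"

definition prod_marg :: "('a \<times> 'b \<Rightarrow> real) \<Rightarrow> 'a \<times> 'b \<Rightarrow> real" where
  "prod_marg j = (\<lambda>(a, b). margA j a * margB j b)"

definition mutual_info :: "('a \<times> 'b \<Rightarrow> real) \<Rightarrow> real" where
  "mutual_info j = KL j (prod_marg j)"

definition joint :: "('a \<Rightarrow> real) \<Rightarrow> ('a \<Rightarrow> nat \<Rightarrow> real) \<Rightarrow> 'a \<times> nat \<Rightarrow> real" where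
  "joint r \<kappa> = (\<lambda>(a, t). r a * \<kappa> a t)"

definition MI_channel :: "('x \<times> 'y \<Rightarrow> real) \<Rightarrow> ('x \<times> 'y \<Rightarrow> nat \<Rightarrow> real) \<Rightarrow> real" where
  "MI_channel p \<kappa> = mutual_info (joint p \<kappa>)"

definition IIB_feasible ::
  "('x::finite \<times> 'y::finite \<Rightarrow> real) \<Rightarrow> real \<Rightarrow> ('x \<times> 'y \<Rightarrow> nat \<Rightarrow> real) \<Rightarrow> bool" where
  "IIB_feasible p lam \<kappa> \<longleftrightarrow> channel \<kappa> \<and> KL (push \<kappa> p) (push \<kappa> (prod_marg p)) = lam"

definition IIB_solution ::
  "('x::finite \<times> 'y::finite \<Rightarrow> real) \<Rightarrow> real \<Rightarrow> ('x \<times> 'y \<Rightarrow> nat \<Rightarrow> real) \<Rightarrow> bool" where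
  "IIB_solution p lam \<kappa> \<longleftrightarrow> IIB_feasible p lam \<kappa> \<and>
     (\<forall>\<kappa>'. IIB_feasible p lam \<kappa>' \<longrightarrow> MI_channel p \<kappa> \<le> MI_channel p \<kappa>')"

definition cond :: "('x \<times> 'y \<Rightarrow> real) \<Rightarrow> 'x \<Rightarrow> 'y \<Rightarrow> real" where
  "cond p x y = p (x, y) / margA p x"

definition equivariance :: "('x \<times> 'y \<Rightarrow> real) \<Rightarrow> ('x \<Rightarrow> 'x) \<Rightarrow> ('y \<Rightarrow> 'y) \<Rightarrow> bool" where
  "equivariance p \<sigma> \<tau> \<longleftrightarrow> bij \<sigma> \<and> bij \<tau> \<and>
     (\<forall>x y. cond p (\<sigma> x) y = cond p x (inv \<tau> y))"

end

theory Submission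
  imports Defs
begin


lemma hs_sum:
  fixes f :: "'i \<Rightarrow> 'b \<Rightarrow> real"
  assumes "finite A" "\<And>i. i \<in> A \<Longrightarrow> (f i has_sum s i) B"
  shows "((\<lambda>x. \<Sum>i\<in>A. f i x) has_sum (\<Sum>i\<in>A. s i)) B"
  using assms
proof (induction A rule: finite_induct)
  case empty then show ?case by simp
next
  case (insert j A)
  have "((\<lambda>x. f j x + (\<Sum>i\<in>A. f i x)) has_sum (s j + (\<Sum>i\<in>A. s i))) B"
    by (intro has_sum_add) (use insert in auto)
  then show ?case using insert by simp
qed

lemma hs_diff:
  fixes f g :: "'b \<Rightarrow> real"
  assumes "(f has_sum a) A" "(g has_sum b) A"
  shows "((\<lambda>x. f x - g x) has_sum (a - b)) A"
proof -
  have "((\<lambda>x. f x + - g x) has_sum (a + - b)) A"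
    by (intro has_sum_add has_sum_uminus[THEN iffD2]) (use assms in auto)
  then show ?thesis by simp
qed

lemma hs_zero:
  fixes g :: "'b \<Rightarrow> real"
  assumes "(g has_sum s) A" "\<And>x. x \<in> A \<Longrightarrow> g x \<ge> 0" "s \<le> 0" "x \<in> A"
  shows "g x = 0"
proof (rule ccontr)
  assume "g x \<noteq> 0"
  then have "g x > 0" using assms(2,4) by force
  have "0 < s"
    by (rule has_sum_strict_mono[OF has_sum_0_simp assms(1)]) (use assms \<open>g x > 0\<close> in auto)
  then show False using assms(3) by simp
qed

lemma summable_bound:
  fixes f g :: "'b \<Rightarrow> real"
  assumes "g summable_on A" "\<And>x. x \<in> A \<Longrightarrow> \<bar>f x\<bar> \<le> g x"
  shows "f summable_on A"
proof -
  have "(\<lambda>x. norm (f x)) summable_on A"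
    by (rule Infinite_Sum.abs_summable_on_comparison_test'[OF assms(1)]) (use assms(2) in auto)
  then show ?thesis using summable_on_iff_abs_summable_on_real by blast
qed

lemma hs_prod:
  fixes F :: "'a::finite \<times> 'c \<Rightarrow> real"
  assumes "\<And>a. ((\<lambda>t. F (a, t)) has_sum S a) UNIV"
  shows "(F has_sum (\<Sum>a\<in>UNIV. S a)) UNIV"
proof -
  have "\<And>a. (F has_sum S a) ({a} \<times> UNIV)"
  proof -
    fix a
    have "(F has_sum S a) (Pair a ` UNIV) \<longleftrightarrow> ((F \<circ> Pair a) has_sum S a) UNIV"
      by (rule has_sum_reindex) (auto simp: inj_on_def)
    moreover have "Pair a ` UNIV = {a} \<times> (UNIV :: 'c set)" by auto
    ultimately show "(F has_sum S a) ({a} \<times> UNIV)" using assms[of a] by (simp add: o_def)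
  qed
  then have "(F has_sum (\<Sum>a\<in>UNIV. S a)) (\<Union>a\<in>UNIV. {a} \<times> UNIV)"
    by (intro sum_has_sum) auto
  moreover have "(\<Union>a\<in>UNIV. {a} \<times> UNIV) = (UNIV :: ('a \<times> 'c) set)" by auto
  ultimately show ?thesis by simp
qed

lemma xlog_ineq:
  fixes x :: real assumes "x > 0"
  shows "0 \<le> x - 1 - ln x" and "x - 1 - ln x = 0 \<Longrightarrow> x = 1"
  using ln_le_minus_one[OF assms] ln_eq_minus_one[OF assms] by auto

lemma hh_ineq:
  fixes u v :: real
  assumes "u \<ge> 0" "v \<ge> 0" "u > 0 \<Longrightarrow> v > 0"
  shows "0 \<le> u * ln (u / v) - u + v" and "u * ln (u / v) - u + v = 0 \<Longrightarrow> u = v"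
proof -
  have "0 \<le> u * ln (u / v) - u + v \<and> (u * ln (u / v) - u + v = 0 \<longrightarrow> u = v)"
  proof (cases "u = 0")
    case True then show ?thesis using assms by auto
  next
    case False
    then have u: "u > 0" using assms by auto
    then have v: "v > 0" using assms by auto
    have x: "v / u > 0" using u v by simp
    have l: "ln (u / v) = - ln (v / u)" using u v by (simp add: ln_div)
    have eq: "u * ln (u / v) - u + v = u * (v / u - 1 - ln (v / u))"
      unfolding l using u by (simp add: field_simps)
    have "0 \<le> u * (v / u - 1 - ln (v / u))" using xlog_ineq(1)[OF x] u by simp
    moreover have "u * (v / u - 1 - ln (v / u)) = 0 \<Longrightarrow> u = v"
    proof -
      assume "u * (v / u - 1 - ln (v / u)) = 0"
      then have "v / u - 1 - ln (v / u) = 0" using u by simp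
      then have "v / u = 1" by (rule xlog_ineq(2)[OF x])
      then show "u = v" using u by (simp add: field_simps)
    qed
    ultimately show ?thesis using eq by simp
  qed
  then show "0 \<le> u * ln (u / v) - u + v" and "u * ln (u / v) - u + v = 0 \<Longrightarrow> u = v" by auto
qed

lemma e_ineq:
  fixes x :: real assumes "x > 0"
  shows "0 \<le> ln x - 1 + 1 / x" and "ln x - 1 + 1 / x = 0 \<Longrightarrow> x = 1"
proof -
  have y: "1 / x > 0" using assms by simp
  have "ln x - 1 + 1 / x = 1 / x - 1 - ln (1 / x)" using assms by (simp add: ln_div)
  then show "0 \<le> ln x - 1 + 1 / x" and "ln x - 1 + 1 / x = 0 \<Longrightarrow> x = 1"
    using xlog_ineq[OF y] by auto
qed




definition avg :: "('a \<Rightarrow> real) \<Rightarrow> ('a \<Rightarrow> real) \<Rightarrow> ('a \<Rightarrow> real) \<Rightarrow> 'a \<Rightarrow> real" where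
  "avg g w k a = (\<Sum>b\<in>{b. g b = g a}. w b * k b) / (\<Sum>b\<in>{b. g b = g a}. w b)"

lemma avg_cong: "g a = g b \<Longrightarrow> avg g w k a = avg g w k b"
  unfolding avg_def by simp

lemma cls_pos:
  fixes w :: "'a::finite \<Rightarrow> real"
  assumes "\<And>b. w b > 0"
  shows "(\<Sum>b\<in>{b. g b = g a}. w b) > 0"
  by (rule sum_pos2[of _ a]) (use assms in \<open>auto intro: less_imp_le\<close>)

lemma avg_swap:
  fixes w :: "'a::finite \<Rightarrow> real"
  assumes wpos: "\<And>b. w b > 0" and phi: "\<And>a b. g a = g b \<Longrightarrow> \<phi> a = \<phi> b"
  shows "(\<Sum>a\<in>UNIV. w a * avg g w k a * \<phi> a) = (\<Sum>a\<in>UNIV. w a * k a * \<phi> a)"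
proof -
  define S where "S a = (\<Sum>b\<in>{b. g b = g a}. w b)" for a
  have Spos: "S a > 0" for a unfolding S_def by (rule cls_pos[OF wpos])
  have S_eq: "S a = (\<Sum>b\<in>UNIV. if g b = g a then w b else 0)" for a
    unfolding S_def by (simp add: sum.If_cases Int_def)
  have "(\<Sum>a\<in>UNIV. w a * avg g w k a * \<phi> a)
      = (\<Sum>a\<in>UNIV. \<Sum>b\<in>UNIV. if g b = g a then w a * \<phi> a / S a * (w b * k b) else 0)"
  proof (rule sum.cong[OF refl])
    fix a
    have "w a * avg g w k a * \<phi> a = w a * \<phi> a / S a * (\<Sum>b\<in>{b. g b = g a}. w b * k b)"
      unfolding avg_def S_def by simp
    also have "\<dots> = (\<Sum>b\<in>{b. g b = g a}. w a * \<phi> a / S a * (w b * k b))"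
      by (simp add: sum_distrib_left)
    also have "\<dots> = (\<Sum>b\<in>UNIV. if g b = g a then w a * \<phi> a / S a * (w b * k b) else 0)"
      by (simp add: sum.If_cases Int_def)
    finally show "w a * avg g w k a * \<phi> a = \<dots>" .
  qed
  also have "\<dots> = (\<Sum>b\<in>UNIV. \<Sum>a\<in>UNIV. if g b = g a then w a * \<phi> a / S a * (w b * k b) else 0)"
    by (rule sum.swap)
  also have "\<dots> = (\<Sum>b\<in>UNIV. w b * k b * \<phi> b / S b * (\<Sum>a\<in>UNIV. if g a = g b then w a else 0))"
  proof (rule sum.cong[OF refl])
    fix b
    have "(\<Sum>a\<in>UNIV. if g b = g a then w a * \<phi> a / S a * (w b * k b) else 0)
        = (\<Sum>a\<in>UNIV. w b * k b * \<phi> b / S b * (if g a = g b then w a else 0))"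
    proof (rule sum.cong[OF refl])
      fix a
      show "(if g b = g a then w a * \<phi> a / S a * (w b * k b) else 0)
        = w b * k b * \<phi> b / S b * (if g a = g b then w a else 0)"
      proof (cases "g b = g a")
        case True
        then have "\<phi> a = \<phi> b" "S a = S b" using phi unfolding S_def by (metis, simp)
        then show ?thesis using True by simp
      qed auto
    qed
    then show "(\<Sum>a\<in>UNIV. if g b = g a then w a * \<phi> a / S a * (w b * k b) else 0)
        = w b * k b * \<phi> b / S b * (\<Sum>a\<in>UNIV. if g a = g b then w a else 0)"
      by (simp add: sum_distrib_left)
  qed
  also have "\<dots> = (\<Sum>b\<in>UNIV. w b * k b * \<phi> b)"
  proof (rule sum.cong[OF refl])
    fix b
    have "(\<Sum>a\<in>UNIV. if g a = g b then w a else 0) = S b"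
      unfolding S_eq by (rule sum.cong) auto
    then show "w b * k b * \<phi> b / S b * (\<Sum>a\<in>UNIV. if g a = g b then w a else 0) = w b * k b * \<phi> b"
      using Spos[of b] by simp
  qed
  finally show ?thesis .
qed




lemma channel_hs: "channel k \<Longrightarrow> (k a has_sum 1) UNIV"
  unfolding channel_def by auto

lemma channel_nn: "channel k \<Longrightarrow> 0 \<le> k a t"
  unfolding channel_def by auto

lemma margA_joint:
  assumes "channel k"
  shows "margA (joint r k) a = r a"
proof -
  have "((\<lambda>t. r a * k a t) has_sum (r a * 1)) UNIV"
    by (rule has_sum_cmult_right[OF channel_hs[OF assms]])
  then show ?thesis unfolding margA_def joint_def by (simp add: infsumI)
qed

lemma margB_joint:
  fixes r :: "'a::finite \<Rightarrow> real"
  shows "margB (joint r k) t = push k r t"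
  unfolding margB_def joint_def push_def by (simp add: mult.commute)

lemma push_hs:
  fixes r :: "'a::finite \<Rightarrow> real"
  assumes "channel k"
  shows "(push k r has_sum (\<Sum>a\<in>UNIV. r a)) UNIV"
proof -
  have "((\<lambda>t. \<Sum>a\<in>UNIV. k a t * r a) has_sum (\<Sum>a\<in>UNIV. 1 * r a)) UNIV"
  proof (rule hs_sum)
    fix a :: 'a
    show "((\<lambda>t. k a t * r a) has_sum (1 * r a)) UNIV"
      by (rule has_sum_cmult_left[OF channel_hs[OF assms]])
  qed simp
  then show ?thesis unfolding push_def by simp
qed

lemma push_ge:
  fixes r :: "'a::finite \<Rightarrow> real"
  assumes "channel k" "\<And>a. r a \<ge> 0"
  shows "k a t * r a \<le> push k r t"
  unfolding push_def
  by (rule member_le_sum) (use assms in \<open>auto intro: mult_nonneg_nonneg channel_nn\<close>)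

lemma G_bound:
  fixes p :: "'a::finite \<Rightarrow> real"
  assumes pos: "\<And>a. p a > 0" and ch: "channel k"
  shows "\<bar>p a * k a t * ln (k a t / push k p t)\<bar> \<le> k a t + p a * push k p t"
proof -
  define u where "u = k a t"
  define m where "m = push k p t"
  have u0: "u \<ge> 0" unfolding u_def using channel_nn[OF ch] .
  have um: "u * p a \<le> m" unfolding u_def m_def by (rule push_ge[OF ch]) (use pos less_imp_le in auto)
  have pa: "p a > 0" by (rule pos)
  have "\<bar>p a * u * ln (u / m)\<bar> \<le> u + p a * m"
  proof (cases "u = 0")
    case True then show ?thesis using um pa by simp
  next
    case False
    then have u: "u > 0" using u0 by simp
    have "u * p a > 0" using u pa by simp
    then have m: "m > 0" using um by linarith
    have l1: "ln (u / m) \<le> u / m - 1" by (rule ln_le_minus_one) (use u m in simp)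
    have l2: "ln (m / u) \<le> m / u - 1" by (rule ln_le_minus_one) (use u m in simp)
    have l3: "ln (u / m) = - ln (m / u)" using u m by (simp add: ln_div)
    have pu: "p a * u > 0" using u pa by simp
    have up: "p a * u * (u / m) \<le> u"
    proof -
      have "p a * u / m \<le> 1" using um m by (simp add: mult.commute)
      then have "u * (p a * u / m) \<le> u * 1" using mult_left_mono u0 by blast
      then show ?thesis by (simp add: field_simps)
    qed
    have upper: "p a * u * ln (u / m) \<le> u"
    proof -
      have "p a * u * ln (u / m) \<le> p a * u * (u / m - 1)"
        by (rule mult_left_mono[OF l1]) (use pu in simp)
      also have "\<dots> \<le> p a * u * (u / m)" using pu by (simp add: field_simps)
      finally show ?thesis using up by simp
    qed
    have lower: "p a * u * ln (u / m) \<ge> - (p a * m)"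
    proof -
      have "p a * u * ln (u / m) \<ge> p a * u * (1 - m / u)"
        unfolding l3 by (rule mult_left_mono) (use l2 pu in auto)
      also have "p a * u * (1 - m / u) = p a * u - p a * m" using u by (simp add: field_simps)
      finally show ?thesis using pu by simp
    qed
    have "0 \<le> p a * m" using pa m by simp
    then show ?thesis using upper lower u0 unfolding abs_le_iff by linarith
  qed
  then show ?thesis unfolding u_def m_def .
qed

lemma G_summable:
  fixes p :: "'a::finite \<Rightarrow> real"
  assumes pos: "\<And>a. p a > 0" and ch: "channel k"
  shows "(\<lambda>t. p a * k a t * ln (k a t / push k p t)) summable_on UNIV"
proof (rule summable_bound)
  have "((\<lambda>t. k a t + p a * push k p t) has_sum (1 + p a * (\<Sum>a\<in>UNIV. p a))) UNIV"
    by (intro has_sum_add has_sum_cmult_right channel_hs[OF ch] push_hs[OF ch])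
  then show "(\<lambda>t. k a t + p a * push k p t) summable_on UNIV" by (rule has_sum_imp_summable)
qed (rule G_bound[OF pos ch])

lemma MI_eq:
  fixes p :: "'x::finite \<times> 'y::finite \<Rightarrow> real"
  assumes pos: "\<And>a. p a > 0" and ch: "channel k"
  shows "MI_channel p k = (\<Sum>a\<in>UNIV. infsum (\<lambda>t. p a * k a t * ln (k a t / push k p t)) UNIV)"
proof -
  define G where "G = (\<lambda>(a, t). p a * k a t * ln (k a t / push k p t))"
  have eqf: "(\<lambda>z. if joint p k z = 0 then 0 else joint p k z * ln (joint p k z / prod_marg (joint p k) z)) = G"
  proof
    fix z :: "('x \<times> 'y) \<times> nat"
    obtain a t where z: "z = (a, t)" by (cases z)
    have pa: "p a > 0" by (rule pos)
    show "(if joint p k z = 0 then 0 else joint p k z * ln (joint p k z / prod_marg (joint p k) z)) = G z"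
    proof -
      have A: "prod_marg (joint p k) (a, t) = p a * push k p t"
        by (simp add: prod_marg_def margA_joint[OF ch] margB_joint)
      have J: "joint p k (a, t) = p a * k a t" by (simp add: joint_def)
      show ?thesis unfolding z A J using pa by (simp add: G_def)
    qed
  qed
  have "(G has_sum (\<Sum>a\<in>UNIV. infsum (\<lambda>t. p a * k a t * ln (k a t / push k p t)) UNIV)) UNIV"
    unfolding G_def by (rule hs_prod) (use G_summable[OF pos ch] in \<open>simp add: summable_iff_has_sum_infsum\<close>)
  then have "infsum G UNIV = (\<Sum>a\<in>UNIV. infsum (\<lambda>t. p a * k a t * ln (k a t / push k p t)) UNIV)"
    by (rule infsumI)
  then show ?thesis unfolding MI_channel_def mutual_info_def KL_def eqf .
qed




lemma minimizer_avg:
  fixes p :: "'x::finite \<times> 'y::finite \<Rightarrow> real" and \<kappa> :: "'x \<times> 'y \<Rightarrow> nat \<Rightarrow> real"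
  assumes pos: "\<And>a. p a > 0" and qpos: "\<And>a. prod_marg p a > 0"
    and sol: "IIB_solution p lam \<kappa>"
    and r_def: "r = (\<lambda>a. p a / prod_marg p a)"
  shows "\<kappa> a0 t0 = avg r p (\<lambda>b. \<kappa> b t0) a0"
proof -
  have ch: "channel \<kappa>" using sol unfolding IIB_solution_def IIB_feasible_def by auto
  define kb where "kb a t = avg r p (\<lambda>b. \<kappa> b t) a" for a t
  define S where "S a = (\<Sum>b\<in>{b. r b = r a}. p b)" for a
  have Spos: "S a > 0" for a unfolding S_def by (rule cls_pos[OF pos])
  have kb_resp: "r a = r b \<Longrightarrow> kb a t = kb b t" for a b t
    unfolding kb_def by (rule avg_cong)
  have kb_alt: "kb a t = (\<Sum>b\<in>{b. r b = r a}. p b / S a * \<kappa> b t)" for a t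
    unfolding kb_def avg_def S_def[symmetric] by (simp add: sum_divide_distrib)
  have kb_nn: "0 \<le> kb a t" for a t
    unfolding kb_alt
    by (intro sum_nonneg mult_nonneg_nonneg divide_nonneg_pos) (use pos Spos channel_nn[OF ch] in \<open>auto intro: less_imp_le\<close>)
  have kb_pos: "kb a t > 0" if "\<kappa> a t > 0" for a t
  proof -
    have "p a / S a * \<kappa> a t \<le> (\<Sum>b\<in>{b. r b = r a}. p b / S a * \<kappa> b t)"
      by (rule member_le_sum) (use pos Spos channel_nn[OF ch] in \<open>auto intro!: mult_nonneg_nonneg divide_nonneg_pos simp: less_imp_le\<close>)
    moreover have "p a / S a * \<kappa> a t > 0" using pos[of a] Spos[of a] that by simp
    ultimately show ?thesis unfolding kb_alt by linarith
  qed
  have kb_hs: "(kb a has_sum 1) UNIV" for a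
  proof -
    have "((\<lambda>t. \<Sum>b\<in>{b. r b = r a}. p b / S a * \<kappa> b t) has_sum (\<Sum>b\<in>{b. r b = r a}. p b / S a * 1)) UNIV"
      by (rule hs_sum) (simp, rule has_sum_cmult_right[OF channel_hs[OF ch]])
    moreover have "(\<Sum>b\<in>{b. r b = r a}. p b / S a * 1) = 1"
      using Spos[of a] by (simp add: sum_divide_distrib[symmetric] S_def)
    moreover have "kb a = (\<lambda>t. \<Sum>b\<in>{b. r b = r a}. p b / S a * \<kappa> b t)"
      by (rule ext) (rule kb_alt)
    ultimately show ?thesis by simp
  qed
  have chb: "channel kb" unfolding channel_def using kb_nn kb_hs by auto
  have push1: "push kb p = push \<kappa> p"
  proof
    fix t
    have "(\<Sum>a\<in>UNIV. p a * kb a t * 1) = (\<Sum>a\<in>UNIV. p a * \<kappa> a t * 1)"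
      unfolding kb_def by (rule avg_swap[OF pos]) simp
    then show "push kb p t = push \<kappa> p t" unfolding push_def by (simp add: mult.commute)
  qed
  have q_eq: "prod_marg p a = p a * inverse (r a)" for a
    using pos[of a] qpos[of a] unfolding r_def by (simp add: field_simps)
  have push2: "push kb (prod_marg p) = push \<kappa> (prod_marg p)"
  proof
    fix t
    have "(\<Sum>a\<in>UNIV. p a * kb a t * inverse (r a)) = (\<Sum>a\<in>UNIV. p a * \<kappa> a t * inverse (r a))"
      unfolding kb_def by (rule avg_swap[OF pos]) simp
    then show "push kb (prod_marg p) t = push \<kappa> (prod_marg p) t" unfolding push_def q_eq
      by (simp add: mult.commute mult.left_commute)
  qed
  have feas: "IIB_feasible p lam kb"
    using sol chb unfolding IIB_solution_def IIB_feasible_def push1 push2 by auto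
  then have MIle: "MI_channel p \<kappa> \<le> MI_channel p kb" using sol unfolding IIB_solution_def by auto
  define m where "m = push \<kappa> p"
  define Gk where "Gk a t = p a * \<kappa> a t * ln (\<kappa> a t / m t)" for a t
  define Gb where "Gb a t = p a * kb a t * ln (kb a t / m t)" for a t
  have MIk: "MI_channel p \<kappa> = (\<Sum>a\<in>UNIV. infsum (Gk a) UNIV)"
    unfolding MI_eq[OF pos ch] Gk_def m_def ..
  have MIb: "MI_channel p kb = (\<Sum>a\<in>UNIV. infsum (Gb a) UNIV)"
    unfolding MI_eq[OF pos chb] Gb_def m_def push1 ..
  have sk: "(Gk a has_sum infsum (Gk a) UNIV) UNIV" for a
    using G_summable[OF pos ch, where a=a] unfolding Gk_def m_def by (simp add: summable_iff_has_sum_infsum)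
  have sb: "(Gb a has_sum infsum (Gb a) UNIV) UNIV" for a
  proof -
    have "(\<lambda>t. p a * kb a t * ln (kb a t / push kb p t)) summable_on UNIV"
      by (rule G_summable[OF pos chb])
    then show ?thesis unfolding Gb_def m_def push1 by (simp add: summable_iff_has_sum_infsum)
  qed
  have hs: "((\<lambda>t. \<Sum>a\<in>UNIV. Gk a t - Gb a t) has_sum (\<Sum>a\<in>UNIV. infsum (Gk a) UNIV - infsum (Gb a) UNIV)) UNIV"
    by (rule hs_sum) (auto intro!: hs_diff sk sb)
  have tot: "(\<Sum>a\<in>UNIV. infsum (Gk a) UNIV - infsum (Gb a) UNIV) \<le> 0"
    using MIle unfolding MIk MIb by (simp add: sum_subtractf)
  define hh where "hh a t = \<kappa> a t * ln (\<kappa> a t / kb a t) - \<kappa> a t + kb a t" for a t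
  have hh_nn: "0 \<le> hh a t" for a t
    unfolding hh_def by (rule hh_ineq(1)) (use channel_nn[OF ch] kb_nn kb_pos in auto)
  have pt: "(\<Sum>a\<in>UNIV. Gk a t - Gb a t) = (\<Sum>a\<in>UNIV. p a * hh a t)" for t
  proof -
    have e1: "(\<Sum>a\<in>UNIV. Gb a t) = (\<Sum>a\<in>UNIV. p a * \<kappa> a t * ln (kb a t / m t))"
      unfolding Gb_def
      using avg_swap[where w=p and g=r and k="\<lambda>b. \<kappa> b t" and \<phi>="\<lambda>a. ln (kb a t / m t)", OF pos] kb_resp
      unfolding kb_def by (metis (no_types, lifting))
    have e2: "(\<Sum>a\<in>UNIV. p a * kb a t * 1) = (\<Sum>a\<in>UNIV. p a * \<kappa> a t * 1)"
      unfolding kb_def by (rule avg_swap[OF pos]) simp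
    have e3: "p a * \<kappa> a t * ln (\<kappa> a t / m t) - p a * \<kappa> a t * ln (kb a t / m t)
        = p a * \<kappa> a t * ln (\<kappa> a t / kb a t)" for a
    proof (cases "\<kappa> a t = 0")
      case False
      then have k: "\<kappa> a t > 0" using channel_nn[OF ch, of a t] by simp
      have mt: "m t > 0"
      proof -
        have "\<kappa> a t * p a > 0" using k pos[of a] by simp
        moreover have "\<kappa> a t * p a \<le> push \<kappa> p t"
          by (rule push_ge[OF ch]) (use pos less_imp_le in blast)
        ultimately show ?thesis unfolding m_def by linarith
      qed
      have "ln (\<kappa> a t / m t) - ln (kb a t / m t) = ln (\<kappa> a t / kb a t)"
        using ln_divide_pos[OF k mt] ln_divide_pos[OF kb_pos[OF k] mt] ln_divide_pos[OF k kb_pos[OF k]] by linarith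
      then show ?thesis by (simp only: right_diff_distrib[symmetric])
    qed simp
    have "(\<Sum>a\<in>UNIV. Gk a t - Gb a t) = (\<Sum>a\<in>UNIV. Gk a t) - (\<Sum>a\<in>UNIV. Gb a t)"
      by (simp add: sum_subtractf)
    also have "\<dots> = (\<Sum>a\<in>UNIV. p a * \<kappa> a t * ln (\<kappa> a t / kb a t))"
      unfolding e1 Gk_def sum_subtractf[symmetric] e3 ..
    also have "\<dots> = (\<Sum>a\<in>UNIV. p a * \<kappa> a t * ln (\<kappa> a t / kb a t)) - (\<Sum>a\<in>UNIV. p a * \<kappa> a t * 1)
        + (\<Sum>a\<in>UNIV. p a * kb a t * 1)"
      using e2 by simp
    also have "\<dots> = (\<Sum>a\<in>UNIV. p a * hh a t)"
    proof -
      have "(\<Sum>a\<in>UNIV. p a * hh a t) = (\<Sum>a\<in>UNIV. (p a * \<kappa> a t * ln (\<kappa> a t / kb a t) - p a * \<kappa> a t * 1) + p a * kb a t * 1)"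
        by (rule sum.cong) (simp_all add: hh_def algebra_simps)
      also have "\<dots> = (\<Sum>a\<in>UNIV. p a * \<kappa> a t * ln (\<kappa> a t / kb a t) - p a * \<kappa> a t * 1) + (\<Sum>a\<in>UNIV. p a * kb a t * 1)"
        by (rule sum.distrib)
      also have "\<dots> = (\<Sum>a\<in>UNIV. p a * \<kappa> a t * ln (\<kappa> a t / kb a t)) - (\<Sum>a\<in>UNIV. p a * \<kappa> a t * 1) + (\<Sum>a\<in>UNIV. p a * kb a t * 1)"
        by (simp only: sum_subtractf)
      finally show ?thesis by simp
    qed
    finally show ?thesis .
  qed
  have pnn: "0 \<le> p a" for a using pos[of a] by linarith
  have nn: "0 \<le> p a * hh a t" for a t using pnn[of a] hh_nn[of a t] by (rule mult_nonneg_nonneg)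
  have nnp: "0 \<le> (\<Sum>a\<in>UNIV. Gk a t - Gb a t)" for t
    unfolding pt by (rule sum_nonneg) (rule nn)
  have z0: "(\<Sum>a\<in>UNIV. Gk a t - Gb a t) = 0" for t
    by (rule hs_zero[OF hs nnp tot]) simp
  have z: "(\<Sum>a\<in>UNIV. p a * hh a t) = 0" for t
    using z0[of t] unfolding pt .
  have "p a0 * hh a0 t0 \<le> (\<Sum>a\<in>UNIV. p a * hh a t0)"
    by (rule member_le_sum) (simp_all add: nn)
  then have "p a0 * hh a0 t0 = 0" using z[of t0] nn[of a0 t0] by linarith
  then have "p a0 = 0 \<or> hh a0 t0 = 0" by (simp only: mult_eq_0_iff)
  then have h: "hh a0 t0 = 0" using pos[of a0] by linarith
  have hk: "\<kappa> a0 t0 > 0 \<Longrightarrow> kb a0 t0 > 0" by (rule kb_pos)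
  have h2: "\<kappa> a0 t0 * ln (\<kappa> a0 t0 / kb a0 t0) - \<kappa> a0 t0 + kb a0 t0 = 0"
    using h unfolding hh_def .
  have "\<kappa> a0 t0 = kb a0 t0"
    by (rule hh_ineq(2)[OF channel_nn[OF ch] kb_nn hk h2])
  then show ?thesis unfolding kb_def .
qed




lemma ring_id: fixes K pa A B C D :: real
  shows "K * pa * (A + B - C - 1 + D) = K * (pa * A) + K * pa * (B - C) - K * pa + K * (pa * D)"
  by algebra

lemma sufficiency:
  fixes p :: "'x::finite \<times> 'y::finite \<Rightarrow> real" and \<kappa> :: "'x \<times> 'y \<Rightarrow> nat \<Rightarrow> real"
  assumes pos: "\<And>a. p a > 0" and qpos: "\<And>a. prod_marg p a > 0"
    and feas: "IIB_feasible p (mutual_info p) \<kappa>"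
    and r_def: "r = (\<lambda>a. p a / prod_marg p a)"
    and k0: "\<kappa> a0 t0 > 0"
  shows "r a0 = push \<kappa> p t0 / push \<kappa> (prod_marg p) t0"
proof -
  have ch: "channel \<kappa>" and kl: "KL (push \<kappa> p) (push \<kappa> (prod_marg p)) = mutual_info p"
    using feas unfolding IIB_feasible_def by auto
  define q where "q = prod_marg p"
  define P where "P = push \<kappa> p"
  define Q where "Q = push \<kappa> q"
  have pnn: "0 \<le> p a" for a using pos[of a] by linarith
  have qnn: "0 \<le> q a" for a using qpos[of a] unfolding q_def by linarith
  have rpos: "r a > 0" for a unfolding r_def using pos[of a] qpos[of a] by simp
  have pqr: "p a = q a * r a" for a unfolding r_def q_def using qpos[of a] by simp
  have MI: "mutual_info p = (\<Sum>a\<in>UNIV. p a * ln (r a))"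
    unfolding mutual_info_def KL_def infsum_finite[OF finite_class.finite_UNIV]
    by (rule sum.cong) (use pos in \<open>auto simp: r_def\<close>)
  have KLe: "KL P Q = infsum (\<lambda>t. P t * ln (P t / Q t)) UNIV"
    unfolding KL_def by (rule infsum_cong) simp
  have hs1: "((\<lambda>t. \<Sum>a\<in>UNIV. \<kappa> a t * (p a * ln (r a))) has_sum (\<Sum>a\<in>UNIV. 1 * (p a * ln (r a)))) UNIV"
    by (rule hs_sum) (simp, rule has_sum_cmult_left[OF channel_hs[OF ch]])
  define R where "R = (\<Sum>a\<in>UNIV. r a)"
  have rR: "r a \<le> R" for a unfolding R_def
    by (rule member_le_sum) (use rpos less_imp_le in auto)
  have Rnn: "0 \<le> R" using rR[of undefined] rpos[of undefined] by linarith
  have Pnn: "0 \<le> P t" for t unfolding P_def push_def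
    by (rule sum_nonneg) (rule mult_nonneg_nonneg[OF channel_nn[OF ch] pnn])
  have Qnn: "0 \<le> Q t" for t unfolding Q_def push_def
    by (rule sum_nonneg) (rule mult_nonneg_nonneg[OF channel_nn[OF ch] qnn])
  have PRQ: "P t \<le> R * Q t" for t
  proof -
    have "P t = (\<Sum>a\<in>UNIV. \<kappa> a t * q a * r a)" unfolding P_def push_def pqr
      by (simp add: mult.assoc)
    also have "\<dots> \<le> (\<Sum>a\<in>UNIV. \<kappa> a t * q a * R)"
      by (rule sum_mono) (rule mult_left_mono[OF rR mult_nonneg_nonneg[OF channel_nn[OF ch] qnn]])
    also have "\<dots> = R * Q t" unfolding Q_def push_def by (simp add: sum_distrib_left mult.commute)
    finally show ?thesis .
  qed
  have bound: "\<bar>P t * ln (P t / Q t)\<bar> \<le> R * P t + Q t" for t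
  proof (cases "P t = 0")
    case True then show ?thesis using Qnn[of t] by simp
  next
    case False
    then have Pp: "P t > 0" using Pnn[of t] by simp
    have Qp: "Q t > 0"
    proof (rule ccontr)
      assume "\<not> Q t > 0"
      then have "Q t = 0" using Qnn[of t] by simp
      then show False using PRQ[of t] Pp by simp
    qed
    have l1: "ln (P t / Q t) \<le> P t / Q t - 1" by (rule ln_le_minus_one) (use Pp Qp in simp)
    have l2: "ln (Q t / P t) \<le> Q t / P t - 1" by (rule ln_le_minus_one) (use Pp Qp in simp)
    have l3: "ln (P t / Q t) = - ln (Q t / P t)" using Pp Qp by (simp add: ln_div)
    have PQ: "P t / Q t \<le> R" using PRQ[of t] Qp by (simp add: divide_le_eq)
    have up: "P t * ln (P t / Q t) \<le> P t * R"
    proof -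
      have "P t * ln (P t / Q t) \<le> P t * (P t / Q t - 1)" by (rule mult_left_mono[OF l1 Pnn])
      also have "\<dots> \<le> P t * R" by (rule mult_left_mono) (use PQ Pnn in auto)
      finally show ?thesis .
    qed
    have lo: "P t * ln (P t / Q t) \<ge> P t - Q t"
    proof -
      have "P t * (1 - Q t / P t) \<le> P t * ln (P t / Q t)"
        unfolding l3 by (rule mult_left_mono) (use l2 Pnn in auto)
      moreover have "P t * (1 - Q t / P t) = P t - Q t" using Pp by (simp add: field_simps)
      ultimately show ?thesis by simp
    qed
    have "0 \<le> R * P t" by (rule mult_nonneg_nonneg[OF Rnn Pnn])
    then show ?thesis using up lo Pnn[of t] Qnn[of t] unfolding abs_le_iff by (simp add: mult.commute)
  qed
  have sP: "((\<lambda>t. R * P t + Q t) has_sum (R * (\<Sum>a\<in>UNIV. p a) + (\<Sum>a\<in>UNIV. q a))) UNIV"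
    unfolding P_def Q_def by (intro has_sum_add has_sum_cmult_right push_hs[OF ch])
  have sumf: "(\<lambda>t. P t * ln (P t / Q t)) summable_on UNIV"
    by (rule summable_bound[OF has_sum_imp_summable[OF sP] bound])
  have hs2: "((\<lambda>t. P t * ln (P t / Q t)) has_sum KL P Q) UNIV"
    unfolding KLe using sumf by (simp add: summable_iff_has_sum_infsum)
  define g where "g t = (\<Sum>a\<in>UNIV. \<kappa> a t * (p a * ln (r a))) - P t * ln (P t / Q t)" for t
  have hsg: "(g has_sum ((\<Sum>a\<in>UNIV. 1 * (p a * ln (r a))) - KL P Q)) UNIV"
    unfolding g_def by (rule hs_diff[OF hs1 hs2])
  have tot: "(\<Sum>a\<in>UNIV. 1 * (p a * ln (r a))) - KL P Q = 0"
    using kl MI unfolding P_def Q_def q_def by simp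
  define e where "e x = ln x - 1 + 1 / x" for x :: real
  have kpP: "\<kappa> a t * p a \<le> P t" for a t
    unfolding P_def by (rule push_ge[OF ch pnn])
  have g_form: "g t = (\<Sum>a\<in>UNIV. \<kappa> a t * p a * e (r a * Q t / P t))" if Pp: "P t > 0" for t
  proof -
    have Qp: "Q t > 0"
    proof (rule ccontr)
      assume "\<not> Q t > 0"
      then have "Q t = 0" using Qnn[of t] by simp
      then show False using PRQ[of t] Pp by simp
    qed
    have trm: "\<kappa> a t * p a * e (r a * Q t / P t)
        = \<kappa> a t * (p a * ln (r a)) + \<kappa> a t * p a * (ln (Q t) - ln (P t)) - \<kappa> a t * p a
          + (\<kappa> a t * q a) * (P t / Q t)" for a
    proof -
      have x: "ln (r a * Q t / P t) = ln (r a) + ln (Q t) - ln (P t)"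
        using ln_divide_pos[OF mult_pos_pos[OF rpos[of a] Qp] Pp] ln_mult_pos[OF rpos[of a] Qp] by linarith
      have y: "p a * (1 / (r a * Q t / P t)) = q a * (P t / Q t)"
        unfolding pqr using rpos[of a] Qp Pp by (simp add: field_simps)
      have "\<kappa> a t * p a * e (r a * Q t / P t) = \<kappa> a t * p a * (ln (r a) + ln (Q t) - ln (P t) - 1 + 1 / (r a * Q t / P t))"
        unfolding e_def x ..
      also have "\<dots> = \<kappa> a t * (p a * ln (r a)) + \<kappa> a t * p a * (ln (Q t) - ln (P t)) - \<kappa> a t * p a
          + \<kappa> a t * (p a * (1 / (r a * Q t / P t)))"
        by (rule ring_id)
      also have "\<dots> = \<kappa> a t * (p a * ln (r a)) + \<kappa> a t * p a * (ln (Q t) - ln (P t)) - \<kappa> a t * p a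
          + (\<kappa> a t * q a) * (P t / Q t)"
        unfolding y by (simp only: mult.assoc)
      finally show ?thesis .
    qed
    have "(\<Sum>a\<in>UNIV. \<kappa> a t * p a * e (r a * Q t / P t))
        = (\<Sum>a\<in>UNIV. \<kappa> a t * (p a * ln (r a))) + (\<Sum>a\<in>UNIV. \<kappa> a t * p a) * (ln (Q t) - ln (P t))
          - (\<Sum>a\<in>UNIV. \<kappa> a t * p a) + (\<Sum>a\<in>UNIV. \<kappa> a t * q a) * (P t / Q t)"
      unfolding trm by (simp only: sum.distrib sum_subtractf sum_distrib_right)
    also have "\<dots> = (\<Sum>a\<in>UNIV. \<kappa> a t * (p a * ln (r a))) + P t * (ln (Q t) - ln (P t)) - P t + Q t * (P t / Q t)"
      unfolding P_def Q_def push_def ..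
    also have "\<dots> = g t"
    proof -
      have "Q t * (P t / Q t) = P t" using Qp by simp
      moreover have "ln (P t / Q t) = ln (P t) - ln (Q t)" by (rule ln_divide_pos[OF Pp Qp])
      ultimately show ?thesis unfolding g_def by (simp add: right_diff_distrib)
    qed
    finally show ?thesis by simp
  qed
  have e_nn: "x > 0 \<Longrightarrow> 0 \<le> e x" for x unfolding e_def by (rule e_ineq(1))
  have arg_pos: "P t > 0 \<Longrightarrow> r a * Q t / P t > 0" for a t
  proof -
    assume Pp: "P t > 0"
    have Qp: "Q t > 0"
    proof (rule ccontr)
      assume "\<not> Q t > 0"
      then have "Q t = 0" using Qnn[of t] by simp
      then show False using PRQ[of t] Pp by simp
    qed
    show ?thesis using rpos[of a] Qp Pp by simp
  qed
  have tnn: "P t > 0 \<Longrightarrow> 0 \<le> \<kappa> a t * p a * e (r a * Q t / P t)" for a t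
    by (rule mult_nonneg_nonneg[OF mult_nonneg_nonneg[OF channel_nn[OF ch] pnn] e_nn[OF arg_pos]])
  have gnn: "0 \<le> g t" for t
  proof (cases "P t > 0")
    case True
    show ?thesis unfolding g_form[OF True] by (rule sum_nonneg) (rule tnn[OF True])
  next
    case False
    then have P0: "P t = 0" using Pnn[of t] by simp
    have "\<kappa> a t = 0" for a
    proof -
      have "\<kappa> a t * p a = 0" using kpP[of a t] P0 mult_nonneg_nonneg[OF channel_nn[OF ch] pnn, of a t a] by linarith
      then show ?thesis using pos[of a] by simp
    qed
    then show ?thesis unfolding g_def P0 by simp
  qed
  have g0: "g t0 = 0" by (rule hs_zero[OF hsg gnn]) (use tot in simp_all)
  have Pp: "P t0 > 0" using kpP[of a0 t0] k0 pos[of a0]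
    by (metis mult_pos_pos order_less_le_trans)
  have "\<kappa> a0 t0 * p a0 * e (r a0 * Q t0 / P t0) \<le> (\<Sum>a\<in>UNIV. \<kappa> a t0 * p a * e (r a * Q t0 / P t0))"
    by (rule member_le_sum) (simp_all add: tnn[OF Pp])
  then have "\<kappa> a0 t0 * p a0 * e (r a0 * Q t0 / P t0) = 0"
    using g0 g_form[OF Pp] tnn[OF Pp, of a0] by linarith
  then have "e (r a0 * Q t0 / P t0) = 0" using k0 pos[of a0] by simp
  then have "r a0 * Q t0 / P t0 = 1" unfolding e_def by (rule e_ineq(2)[OF arg_pos[OF Pp]])
  then have eq: "r a0 * Q t0 = P t0" using Pp by (simp add: field_simps)
  then have Qn: "Q t0 \<noteq> 0" using Pp by auto
  have "r a0 = P t0 / Q t0" using eq Qn by (simp add: eq_divide_eq)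
  then show ?thesis unfolding P_def Q_def q_def .
qed




theorem theorem2:
  fixes p :: "'x::finite \<times> 'y::finite \<Rightarrow> real"
    and \<kappa> :: "'x \<times> 'y \<Rightarrow> nat \<Rightarrow> real"
    and \<sigma> :: "'x \<Rightarrow> 'x" and \<tau> :: "'y \<Rightarrow> 'y"
  assumes pos: "\<forall>a. p a > 0"
    and prob: "(\<Sum>a\<in>UNIV. p a) = 1"
    and unifY: "\<forall>y. margB p y = 1 / real CARD('y)"
    and sol: "IIB_solution p (mutual_info p) \<kappa>"
    and bij: "bij \<sigma>" "bij \<tau>"
  shows "equivariance p \<sigma> \<tau> \<longleftrightarrow> (\<forall>x y t. \<kappa> (\<sigma> x, \<tau> y) t = \<kappa> (x, y) t)"
proof -
  have pos': "\<And>a. p a > 0" using pos by auto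
  have mA: "margA p x > 0" for x
    unfolding margA_def infsum_finite[OF finite_class.finite_UNIV]
    by (rule sum_pos) (use pos' in auto)
  have C: "real CARD('y) > 0" by simp
  have mB: "margB p y > 0" for y using unifY C by simp
  have qpos: "\<And>a. prod_marg p a > 0"
  proof -
    fix a :: "'x \<times> 'y"
    obtain x y where "a = (x, y)" by (cases a)
    then show "prod_marg p a > 0" unfolding prod_marg_def using mA[of x] mB[of y] by simp
  qed
  define r where "r = (\<lambda>a. p a / prod_marg p a)"
  have r_cond: "r (x, y) = cond p x y * real CARD('y)" for x y
    unfolding r_def prod_marg_def cond_def using unifY mA[of x] C by simp
  have feas: "IIB_feasible p (mutual_info p) \<kappa>" using sol unfolding IIB_solution_def by auto
  have ch: "channel \<kappa>" using feas unfolding IIB_feasible_def by auto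
  have ex_t: "\<exists>t. \<kappa> a t > 0" for a
  proof (rule ccontr)
    assume "\<not> (\<exists>t. \<kappa> a t > 0)"
    then have "\<kappa> a = (\<lambda>_. 0)" using channel_nn[OF ch, of a] by (auto intro!: ext simp: not_less order.antisym)
    then have "((\<lambda>_::nat. 0::real) has_sum 1) UNIV" using channel_hs[OF ch, of a] by simp
    then show False using has_sum_unique[OF _ has_sum_0_simp] by fastforce
  qed
  show ?thesis
  proof
    assume eqv: "equivariance p \<sigma> \<tau>"
    show "\<forall>x y t. \<kappa> (\<sigma> x, \<tau> y) t = \<kappa> (x, y) t"
    proof (intro allI)
      fix x y t
      have "cond p (\<sigma> x) (\<tau> y) = cond p x (inv \<tau> (\<tau> y))" using eqv unfolding equivariance_def by blast
      also have "inv \<tau> (\<tau> y) = y" using bij(2) by (simp add: bij_is_inj)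
      finally have "r (\<sigma> x, \<tau> y) = r (x, y)" unfolding r_cond by simp
      then show "\<kappa> (\<sigma> x, \<tau> y) t = \<kappa> (x, y) t"
        using minimizer_avg[OF pos' qpos sol r_def] avg_cong by metis
    qed
  next
    assume inv: "\<forall>x y t. \<kappa> (\<sigma> x, \<tau> y) t = \<kappa> (x, y) t"
    have "cond p (\<sigma> x) y = cond p x (inv \<tau> y)" for x y
    proof -
      define y0 where "y0 = inv \<tau> y"
      have ty: "\<tau> y0 = y" unfolding y0_def using bij(2) by (simp add: bij_is_surj surj_f_inv_f)
      obtain t where t: "\<kappa> (x, y0) t > 0" using ex_t by blast
      then have t2: "\<kappa> (\<sigma> x, \<tau> y0) t > 0" using inv by simp
      have "r (x, y0) = r (\<sigma> x, \<tau> y0)"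
        using sufficiency[OF pos' qpos feas r_def t] sufficiency[OF pos' qpos feas r_def t2] by simp
      then have "cond p (\<sigma> x) (\<tau> y0) = cond p x y0" unfolding r_cond using C by simp
      then show ?thesis using ty unfolding y0_def by simp
    qed
    then show "equivariance p \<sigma> \<tau>" unfolding equivariance_def using bij by blast
  qed
qed


end
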